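(* Let $G$ be a finite group and let $r\geq 2$ be a prime with $\gcd(r,|G|)=1$. Then $P_r(G\wr S_{n+1})=P_r(G\wr S_n)$ for every $n\in\mathbb{N}$ with $n\not\equiv -1 \pmod r$. Equivalently, $|\omega_r(G\wr S_{n+1})|=|G|(n+1)\,|\omega_r(G\wr S_n)|$ for every such $n$.
   Context: For a finite group $G$, the wreath product $G\wr S_n$ is the set of pairs $(f,\pi)$ with $f:\{1,\dots,n\}\to G$ any function and $\pi\in S_n$, with multiplication $(f,\pi)(f',\pi')=(f f'_{\pi},\pi\pi')$, where $f'_\pi(i)=f'(\pi^{-1}(i))$ and functions are multiplied pointwise; it has order $|G|^n n!$. The power map $\omega_r:G\wr S_n\to G\wr S_n$ is $x\mapsto x^r$, $\omega_r(G\wr S_n)$ denotes its image (the set of $r$-th powers), and $P_r(G\wr S_n)=\frac{|\omega_r(G\wr S_n)|}{|G|^n n!}$. *)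

theory Defs
  imports Complex_Main "HOL-Algebra.Group" "HOL-Library.FuncSet" "HOL-Combinatorics.Permutations"
    "HOL-Computational_Algebra.Primes" "HOL-Number_Theory.Cong"
begin

text \<open>Elements are pairs (f, p) with f : {0..<n} -> carrier G (extensional) and p a
  permutation of {0..<n}; (f,p)(f',p') = (f * f'_p, p o p') with f'_p i = f' (p^-1 i).\<close>

definition wreath :: "('a, 'b) monoid_scheme \<Rightarrow> nat \<Rightarrow> ((nat \<Rightarrow> 'a) \<times> (nat \<Rightarrow> nat)) monoid" where
  "wreath G n = \<lparr> carrier = {(f, p). f \<in> {0..<n} \<rightarrow>\<^sub>E carrier G \<and> p permutes {0..<n}},
     monoid.mult = (\<lambda>(f, p) (f', p'). ((\<lambda>i\<in>{0..<n}. f i \<otimes>\<^bsub>G\<^esub> f' (inv_into UNIV p i)), p \<circ> p')),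
     one = ((\<lambda>i\<in>{0..<n}. \<one>\<^bsub>G\<^esub>), id) \<rparr>"

definition power_image :: "('c, 'd) monoid_scheme \<Rightarrow> nat \<Rightarrow> 'c set" where
  "power_image H r = (\<lambda>x. x [^]\<^bsub>H\<^esub> r) ` carrier H"

definition P_r :: "('a, 'b) monoid_scheme \<Rightarrow> nat \<Rightarrow> nat \<Rightarrow> real" where
  "P_r G r n = real (card (power_image (wreath G n) r)) /
               (real (card (carrier G)) ^ n * real (fact n))"

end

theory Submission
  imports Defs "HOL-Combinatorics.Cycles" "HOL-Combinatorics.Orbits" "HOL-Algebra.Multiplicative_Group"
begin


definition W :: "('a,'b) monoid_scheme \<Rightarrow> nat set \<Rightarrow> ((nat \<Rightarrow> 'a) \<times> (nat \<Rightarrow> nat)) monoid" where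
  "W G A = \<lparr> carrier = {(f, p). f \<in> A \<rightarrow>\<^sub>E carrier G \<and> p permutes A},
     monoid.mult = (\<lambda>(f, p) (f', p'). ((\<lambda>i\<in>A. f i \<otimes>\<^bsub>G\<^esub> f' (inv_into UNIV p i)), p \<circ> p')),
     one = ((\<lambda>i\<in>A. \<one>\<^bsub>G\<^esub>), id) \<rparr>"

lemma wreath_W: "wreath G n = W G {0..<n}" unfolding wreath_def W_def by simp

lemma W_carrier: "x \<in> carrier (W G A) \<longleftrightarrow> fst x \<in> A \<rightarrow>\<^sub>E carrier G \<and> snd x permutes A"
  by (cases x) (simp add: W_def)

lemma W_mult: "x \<otimes>\<^bsub>W G A\<^esub> y = ((\<lambda>i\<in>A. fst x i \<otimes>\<^bsub>G\<^esub> fst y (inv_into UNIV (snd x) i)), snd x \<circ> snd y)"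
  by (cases x; cases y) (simp add: W_def)

lemma W_one: "\<one>\<^bsub>W G A\<^esub> = ((\<lambda>i\<in>A. \<one>\<^bsub>G\<^esub>), id)"
  by (simp add: W_def)

lemma W_pow_snd: "snd (x [^]\<^bsub>W G A\<^esub> (k::nat)) = snd x ^^ k"
  by (induction k) (simp_all add: W_mult W_one fun_eq_iff funpow_swap1)

lemma (in group) W_monoid: "monoid (W G A)"
proof
  fix x y assume x: "x \<in> carrier (W G A)" and y: "y \<in> carrier (W G A)"
  have "inv_into UNIV (snd x) permutes A" using x by (simp add: W_carrier permutes_inv)
  then have "\<And>i. i \<in> A \<Longrightarrow> inv_into UNIV (snd x) i \<in> A" by (simp add: permutes_in_image)
  then show "x \<otimes>\<^bsub>W G A\<^esub> y \<in> carrier (W G A)" using x y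
    by (auto simp: W_carrier W_mult PiE_def Pi_def permutes_compose)
next
  fix x y z assume x: "x \<in> carrier (W G A)" and y: "y \<in> carrier (W G A)" and z: "z \<in> carrier (W G A)"
  have ix: "\<And>i. i \<in> A \<Longrightarrow> inv_into UNIV (snd x) i \<in> A" using x by (simp add: W_carrier permutes_inv permutes_in_image)
  have iy: "\<And>i. i \<in> A \<Longrightarrow> inv_into UNIV (snd y) i \<in> A" using y by (simp add: W_carrier permutes_inv permutes_in_image)
  have d: "inv_into UNIV (snd x \<circ> snd y) = inv_into UNIV (snd y) \<circ> inv_into UNIV (snd x)"
    using x y by (metis W_carrier o_inv_distrib permutes_bij)
  show "x \<otimes>\<^bsub>W G A\<^esub> y \<otimes>\<^bsub>W G A\<^esub> z = x \<otimes>\<^bsub>W G A\<^esub> (y \<otimes>\<^bsub>W G A\<^esub> z)"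
    using x y z ix iy
    by (auto simp: W_carrier W_mult d m_assoc PiE_def Pi_def intro!: ext)
next
  show "\<one>\<^bsub>W G A\<^esub> \<in> carrier (W G A)" by (simp add: W_one W_carrier)
next
  fix x assume x: "x \<in> carrier (W G A)"
  have ix: "\<And>i. i \<in> A \<Longrightarrow> inv_into UNIV (snd x) i \<in> A" using x by (simp add: W_carrier permutes_inv permutes_in_image)
  show "\<one>\<^bsub>W G A\<^esub> \<otimes>\<^bsub>W G A\<^esub> x = x" using x
    by (cases x) (auto simp: W_carrier W_mult W_one PiE_def Pi_def extensional_def intro!: ext)
  show "x \<otimes>\<^bsub>W G A\<^esub> \<one>\<^bsub>W G A\<^esub> = x" using x ix
    by (cases x) (auto simp: W_carrier W_mult W_one PiE_def Pi_def extensional_def intro!: ext)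
qed




lemma funpow_permutes_outside: "p permutes A \<Longrightarrow> i \<notin> A \<Longrightarrow> (p ^^ n) i = i"
  by (induction n) (simp_all add: permutes_not_in)

lemma per_dvd_iff: "permutation p \<Longrightarrow> least_power p i dvd n \<longleftrightarrow> (p ^^ n) i = i"
  by (rule least_power_dvd)

lemma per_pos: "permutation p \<Longrightarrow> least_power p i > 0"
  by (rule least_power_of_permutation(2))

lemma dvd_unique_nat: "(\<And>n. (d::nat) dvd n \<longleftrightarrow> e dvd n) \<Longrightarrow> d = e"
  by (meson dvd_antisym dvd_refl)

lemma per_funpow_pt:
  assumes "permutation p" shows "least_power p ((p ^^ k) i) = least_power p i"
proof (rule dvd_unique_nat)
  fix n
  have inj: "inj (p ^^ k)" using assms by (simp add: bij_is_inj permutation_bijective bij_fn)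
  have "(p ^^ n) \<circ> (p ^^ k) = p ^^ (n + k)" by (rule funpow_add[symmetric])
  also have "\<dots> = p ^^ (k + n)" by (simp only: add.commute)
  also have "\<dots> = (p ^^ k) \<circ> (p ^^ n)" by (rule funpow_add)
  finally have e: "(p ^^ n) ((p ^^ k) i) = (p ^^ k) ((p ^^ n) i)" by (metis comp_apply)
  have "(p ^^ k) ((p ^^ n) i) = (p ^^ k) i \<longleftrightarrow> (p ^^ n) i = i" by (rule inj_eq[OF inj])
  then have "(p ^^ n) ((p ^^ k) i) = (p ^^ k) i \<longleftrightarrow> (p ^^ n) i = i" by (simp only: e)
  then show "least_power p ((p ^^ k) i) dvd n \<longleftrightarrow> least_power p i dvd n"
    using assms by (simp only: per_dvd_iff)
qed

lemma per_app: "permutation p \<Longrightarrow> least_power p (p i) = least_power p i"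
  using per_funpow_pt[of p 1 i] by simp

lemma per_power_dvd:
  assumes "permutation p" shows "least_power (p ^^ r) i dvd n \<longleftrightarrow> least_power p i dvd r * n"
proof -
  have "permutation (p ^^ r)" using assms by (rule permutation_funpow)
  then show ?thesis using assms by (simp add: per_dvd_iff funpow_mult)
qed

lemma per_power_prime:
  assumes "permutation p" "prime r"
  shows "least_power (p ^^ r) i = (if r dvd least_power p i then least_power p i div r else least_power p i)"
proof (cases "r dvd least_power p i")
  case True
  then obtain m where m: "least_power p i = r * m" by blast
  have "r > 0" "r \<noteq> 0" using assms(2) prime_gt_0_nat by auto
  have "least_power (p ^^ r) i = m"
    by (rule dvd_unique_nat) (simp add: per_power_dvd[OF assms(1)] m \<open>r \<noteq> 0\<close>)
  then show ?thesis using True m \<open>r > 0\<close> by simp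
next
  case False
  then have cop: "coprime (least_power p i) r"
    using assms(2) by (metis coprime_commute prime_imp_coprime_nat)
  have "least_power (p ^^ r) i = least_power p i"
    by (rule dvd_unique_nat) (simp add: per_power_dvd[OF assms(1)] coprime_dvd_mult_right_iff cop)
  then show ?thesis using False by simp
qed

lemma perm_restrict_funpow:
  assumes "p ` A \<subseteq> A" "i \<in> A" shows "(perm_restrict p A ^^ n) i = (p ^^ n) i \<and> (p ^^ n) i \<in> A"
  using assms by (induction n) (auto simp: perm_restrict_simps)

lemma per_perm_restrict:
  assumes "p ` A \<subseteq> A" "i \<in> A" shows "least_power (perm_restrict p A) i = least_power p i"
  unfolding least_power_def using perm_restrict_funpow[OF assms] by simp

lemma perm_restrict_permutes:
  assumes "p permutes B" "p ` A = A" shows "perm_restrict p A permutes A"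
proof (rule bij_imp_permutes)
  have "inj_on p A" using assms(1) by (meson permutes_inj inj_on_subset subset_UNIV)
  then have "bij_betw p A A" using assms(2) by (simp add: bij_betw_def)
  moreover have "bij_betw (perm_restrict p A) A A \<longleftrightarrow> bij_betw p A A"
    by (rule bij_betw_cong) (simp add: perm_restrict_simps)
  ultimately show "bij_betw (perm_restrict p A) A A" by simp
qed (simp add: perm_restrict_simps)

lemma permutes_inv_sub:
  assumes "p permutes B" "finite A" "p ` A \<subseteq> A" shows "p ` A = A"
  using assms by (meson endo_inj_surj permutes_inj inj_on_subset subset_UNIV)

lemma PiE_if: "f \<in> A \<rightarrow>\<^sub>E X \<Longrightarrow> g \<in> C \<rightarrow>\<^sub>E X \<Longrightarrow> (\<lambda>i. if i \<in> A then f i else g i) \<in> (A \<union> C) \<rightarrow>\<^sub>E X"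
  by (auto simp: PiE_iff extensional_def)

definition res :: "nat set \<Rightarrow> (nat \<Rightarrow> 'a) \<times> (nat \<Rightarrow> nat) \<Rightarrow> (nat \<Rightarrow> 'a) \<times> (nat \<Rightarrow> nat)" where
  "res A x = (restrict (fst x) A, perm_restrict (snd x) A)"

definition glue :: "nat set \<Rightarrow> (nat \<Rightarrow> 'a) \<times> (nat \<Rightarrow> nat) \<Rightarrow> (nat \<Rightarrow> 'a) \<times> (nat \<Rightarrow> nat) \<Rightarrow> (nat \<Rightarrow> 'a) \<times> (nat \<Rightarrow> nat)" where
  "glue A z w = ((\<lambda>i. if i \<in> A then fst z i else fst w i), (\<lambda>i. if i \<in> A then snd z i else snd w i))"

lemma res_carrier:
  assumes "x \<in> carrier (W G B)" "A \<subseteq> B" "snd x ` A = A"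
  shows "res A x \<in> carrier (W G A)"
proof -
  have f: "fst x \<in> B \<rightarrow>\<^sub>E carrier G" and p: "snd x permutes B" using assms(1) by (simp_all add: W_carrier)
  have "restrict (fst x) A \<in> A \<rightarrow>\<^sub>E carrier G"
    unfolding restrict_PiE_iff using PiE_mem[OF f] assms(2) by blast
  moreover have "perm_restrict (snd x) A permutes A" by (rule perm_restrict_permutes[OF p assms(3)])
  ultimately show ?thesis by (simp add: W_carrier res_def)
qed

lemma inv_perm_restrict:
  assumes "p permutes B" "p ` A = A" "i \<in> A"
  shows "inv_into UNIV (perm_restrict p A) i = inv_into UNIV p i" "inv_into UNIV p i \<in> A"
proof -
  have "i \<in> p ` A" using assms(2,3) by simp
  then obtain j where j: "j \<in> A" "p j = i" by blast
  have "inv_into UNIV p (p j) = j" by (rule permutes_inverses(2)[OF assms(1)])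
  then have 1: "inv_into UNIV p i = j" by (simp only: j(2))
  have q: "perm_restrict p A permutes A" by (rule perm_restrict_permutes[OF assms(1,2)])
  have "inv_into UNIV (perm_restrict p A) (perm_restrict p A j) = j" by (rule permutes_inverses(2)[OF q])
  moreover have "perm_restrict p A j = i" using j by (simp add: perm_restrict_simps)
  ultimately have 2: "inv_into UNIV (perm_restrict p A) i = j" by simp
  show "inv_into UNIV (perm_restrict p A) i = inv_into UNIV p i" "inv_into UNIV p i \<in> A"
    using 1 2 j(1) by simp_all
qed

lemma perm_restrict_comp':
  assumes "q ` A \<subseteq> A" shows "perm_restrict (p \<circ> q) A = perm_restrict p A \<circ> perm_restrict q A"
  using assms by (auto simp: perm_restrict_def fun_eq_iff)

lemma res_mult:
  assumes x: "x \<in> carrier (W G B)" and y: "y \<in> carrier (W G B)" and AB: "A \<subseteq> B"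
    and ix: "snd x ` A = A" and iy: "snd y ` A = A"
  shows "res A (x \<otimes>\<^bsub>W G B\<^esub> y) = res A x \<otimes>\<^bsub>W G A\<^esub> res A y"
proof -
  have px: "snd x permutes B" using x by (simp add: W_carrier)
  show ?thesis
    using AB inv_perm_restrict[OF px ix] iy
    by (auto simp: res_def W_mult perm_restrict_comp' intro!: ext)
qed

lemma res_one: "A \<subseteq> B \<Longrightarrow> res A (\<one>\<^bsub>W G B\<^esub>) = \<one>\<^bsub>W G A\<^esub>"
  by (auto simp: res_def W_one perm_restrict_def fun_eq_iff)

lemma funpow_image_inv: "p ` A = A \<Longrightarrow> (p ^^ n) ` A = A"
proof (induction n)
  case (Suc n)
  have "(p ^^ Suc n) ` A = p ` ((p ^^ n) ` A)" by (simp add: image_comp)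
  then show ?case using Suc by simp
qed simp

lemma (in group) res_pow:
  assumes x: "x \<in> carrier (W G B)" and AB: "A \<subseteq> B" and ix: "snd x ` A = A"
  shows "res A (x [^]\<^bsub>W G B\<^esub> (k::nat)) = res A x [^]\<^bsub>W G A\<^esub> k"
proof (induction k)
  case 0 then show ?case using AB by (simp add: res_one)
next
  case (Suc k)
  have c: "x [^]\<^bsub>W G B\<^esub> k \<in> carrier (W G B)" using x by (simp add: monoid.nat_pow_closed W_monoid)
  have i: "snd (x [^]\<^bsub>W G B\<^esub> k) ` A = A" using ix by (simp add: W_pow_snd funpow_image_inv)
  show ?case using res_mult[OF c x AB i ix] Suc by simp
qed

lemma W_ext:
  assumes x: "x \<in> carrier (W G B)" and y: "y \<in> carrier (W G B)" and AB: "A \<subseteq> B"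
    and eA: "res A x = res A y" and eC: "res (B - A) x = res (B - A) y"
  shows "x = y"
proof -
  have a1: "restrict (fst x) A = restrict (fst y) A" "perm_restrict (snd x) A = perm_restrict (snd y) A"
    using eA by (simp_all add: res_def)
  have c1: "restrict (fst x) (B - A) = restrict (fst y) (B - A)" "perm_restrict (snd x) (B - A) = perm_restrict (snd y) (B - A)"
    using eC by (simp_all add: res_def)
  have f: "fst x i = fst y i" for i
  proof (cases "i \<in> B")
    case True
    show ?thesis
    proof (cases "i \<in> A")
      case True then show ?thesis using fun_cong[OF a1(1), of i] by simp
    next
      case False then show ?thesis using fun_cong[OF c1(1), of i] \<open>i \<in> B\<close> by simp
    qed
  next
    case False then show ?thesis using x y by (auto simp: W_carrier PiE_def extensional_def)
  qed
  have s: "snd x i = snd y i" for i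
  proof (cases "i \<in> B")
    case True
    show ?thesis
    proof (cases "i \<in> A")
      case True then show ?thesis using fun_cong[OF a1(2), of i] by (simp add: perm_restrict_simps)
    next
      case False then show ?thesis using fun_cong[OF c1(2), of i] \<open>i \<in> B\<close> by (simp add: perm_restrict_simps)
    qed
  next
    case False then show ?thesis using x y by (auto simp: W_carrier permutes_not_in)
  qed
  show ?thesis using f s by (simp add: prod_eq_iff fun_eq_iff)
qed

lemma glue_props:
  assumes z: "z \<in> carrier (W G A)" and w: "w \<in> carrier (W G C)" and d: "A \<inter> C = {}"
  shows "glue A z w \<in> carrier (W G (A \<union> C))" "snd (glue A z w) ` A = A" "snd (glue A z w) ` C = C"
    "res A (glue A z w) = z" "res C (glue A z w) = w"
    "snd (glue A z w) = snd z \<circ> snd w"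
proof -
  have pz: "snd z permutes A" and pw: "snd w permutes C" using z w by (auto simp: W_carrier)
  have fz: "fst z \<in> A \<rightarrow>\<^sub>E carrier G" and fw: "fst w \<in> C \<rightarrow>\<^sub>E carrier G"
    using z w by (auto simp: W_carrier)
  have eq: "snd (glue A z w) = snd z \<circ> snd w"
  proof
    fix i show "snd (glue A z w) i = (snd z \<circ> snd w) i"
    proof (cases "i \<in> A")
      case True then have "i \<notin> C" using d by blast
      then show ?thesis using True pw by (simp add: glue_def permutes_not_in)
    next
      case False
      show ?thesis
      proof (cases "i \<in> C")
        case True then have "snd w i \<in> C" using pw by (simp add: permutes_in_image)
        then have "snd w i \<notin> A" using d by blast
        then show ?thesis using False pz by (simp add: glue_def permutes_not_in)
      next
        case False2: False
        then show ?thesis using False pz pw by (simp add: glue_def permutes_not_in)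
      qed
    qed
  qed
  then show "snd (glue A z w) = snd z \<circ> snd w" .
  have pg: "snd z \<circ> snd w permutes A \<union> C"
    using pz pw by (meson permutes_compose permutes_subset sup_ge1 sup_ge2)
  have fg: "fst (glue A z w) \<in> (A \<union> C) \<rightarrow>\<^sub>E carrier G"
    unfolding glue_def fst_conv by (rule PiE_if[OF fz fw])
  show "glue A z w \<in> carrier (W G (A \<union> C))" using pg fg eq by (simp add: W_carrier)
  have "snd (glue A z w) ` A = snd z ` A" by (intro image_cong) (auto simp: glue_def)
  then show "snd (glue A z w) ` A = A" using permutes_image[OF pz] by (rule trans)
  have "snd (glue A z w) ` C = snd w ` C"
  proof (rule image_cong[OF refl])
    fix i assume "i \<in> C" then have "i \<notin> A" using d by blast
    then show "snd (glue A z w) i = snd w i" by (simp add: glue_def)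
  qed
  then show "snd (glue A z w) ` C = C" using permutes_image[OF pw] by (rule trans)
  have r1: "restrict (fst (glue A z w)) A = fst z"
  proof (rule ext)
    fix i show "restrict (fst (glue A z w)) A i = fst z i"
      using PiE_arb[OF fz] by (cases "i \<in> A") (simp_all add: glue_def)
  qed
  have r2: "perm_restrict (snd (glue A z w)) A = snd z"
  proof (rule ext)
    fix i show "perm_restrict (snd (glue A z w)) A i = snd z i"
      using pz by (cases "i \<in> A") (simp_all add: glue_def perm_restrict_simps permutes_not_in)
  qed
  show "res A (glue A z w) = z" using r1 r2 by (simp add: res_def)
  have r3: "restrict (fst (glue A z w)) C = fst w"
  proof (rule ext)
    fix i show "restrict (fst (glue A z w)) C i = fst w i"
    proof (cases "i \<in> C")
      case True then have "i \<notin> A" using d by blast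
      then show ?thesis using True by (simp add: glue_def)
    next
      case False then show ?thesis using PiE_arb[OF fw] by (simp add: glue_def)
    qed
  qed
  have r4: "perm_restrict (snd (glue A z w)) C = snd w"
  proof (rule ext)
    fix i show "perm_restrict (snd (glue A z w)) C i = snd w i"
    proof (cases "i \<in> C")
      case True then have "i \<notin> A" using d by blast
      then show ?thesis using True by (simp add: glue_def perm_restrict_simps)
    next
      case False then show ?thesis using pw by (simp add: perm_restrict_simps permutes_not_in)
    qed
  qed
  show "res C (glue A z w) = w" using r3 r4 by (simp add: res_def)
qed




locale wr = group G for G :: "('a, 'b) monoid_scheme" (structure) +
  fixes r :: nat
  assumes finG: "finite (carrier G)" and prime_r: "prime r" and cop_r: "coprime r (card (carrier G))"
begin

abbreviation Om :: "nat set \<Rightarrow> ((nat \<Rightarrow> 'a) \<times> (nat \<Rightarrow> nat)) set" where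
  "Om B \<equiv> power_image (W G B) r"

lemma W_pow_closed: "x \<in> carrier (W G B) \<Longrightarrow> x [^]\<^bsub>W G B\<^esub> (k::nat) \<in> carrier (W G B)"
  by (simp add: monoid.nat_pow_closed W_monoid)

lemma Om_sub: "Om B \<subseteq> carrier (W G B)"
  unfolding power_image_def using W_pow_closed by blast

lemma base_pow:
  assumes h: "h \<in> C \<rightarrow>\<^sub>E carrier G"
  shows "(h, id) [^]\<^bsub>W G C\<^esub> (k::nat) = ((\<lambda>i\<in>C. h i [^] k), id)"
proof (induction k)
  case 0 then show ?case by (simp add: W_one restrict_def id_def)
next
  case (Suc k)
  show ?case using Suc by (simp add: W_mult fun_eq_iff)
qed

lemma finite_carrier_W: "finite B \<Longrightarrow> finite (carrier (W G B))"
proof -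
  assume B: "finite B"
  have "carrier (W G B) \<subseteq> (B \<rightarrow>\<^sub>E carrier G) \<times> {p. p permutes B}"
    by (auto simp: W_carrier)
  moreover have "finite ((B \<rightarrow>\<^sub>E carrier G) \<times> {p. p permutes B})"
    using B finG by (simp add: finite_PiE finite_permutations)
  ultimately show ?thesis by (rule finite_subset)
qed

lemma Rtype_root:
  assumes C: "finite C" and w: "w \<in> carrier (W G C)"
    and nd: "\<And>i. i \<in> C \<Longrightarrow> \<not> r dvd least_power (snd w) i"
  shows "w \<in> Om C"
proof -
  define p where "p = snd w"
  have pC: "p permutes C" using w by (simp add: W_carrier p_def)
  have perm: "permutation p" using pC C permutation_permutes by blast
  define l where "l = (\<Prod>i\<in>C. least_power p i)"
  have lpos: "l > 0" unfolding l_def using per_pos[OF perm] by (simp add: prod_pos)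
  have ndl: "\<not> r dvd l" unfolding l_def using nd C prime_r by (simp add: prime_dvd_prod_iff p_def)
  have pl: "p ^^ l = id"
  proof
    fix i show "(p ^^ l) i = id i"
    proof (cases "i \<in> C")
      case True
      have "least_power p i dvd l" unfolding l_def using C True by (rule dvd_prodI)
      then show ?thesis using perm by (simp add: per_dvd_iff)
    next
      case False then show ?thesis using pC by (simp add: funpow_permutes_outside)
    qed
  qed
  define h where "h = fst (w [^]\<^bsub>W G C\<^esub> l)"
  have wl: "w [^]\<^bsub>W G C\<^esub> l = (h, id)"
    using pl by (simp add: h_def prod_eq_iff W_pow_snd p_def)
  have hC: "h \<in> C \<rightarrow>\<^sub>E carrier G"
    using W_pow_closed[OF w, of l] by (simp add: W_carrier h_def)
  have "(h, id) [^]\<^bsub>W G C\<^esub> order G = ((\<lambda>i\<in>C. \<one>), id)"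
    using base_pow[OF hC] PiE_mem[OF hC] pow_order_eq_1 by (simp add: fun_eq_iff)
  moreover have "w [^]\<^bsub>W G C\<^esub> (l * order G) = (w [^]\<^bsub>W G C\<^esub> l) [^]\<^bsub>W G C\<^esub> order G"
    by (simp only: monoid.nat_pow_pow[OF W_monoid w])
  ultimately have wM: "w [^]\<^bsub>W G C\<^esub> (l * order G) = \<one>\<^bsub>W G C\<^esub>"
    using wl by (simp add: W_one)
  define M where "M = l * order G"
  have cop: "coprime r M"
    unfolding M_def order_def using ndl prime_r cop_r
    by (simp add: prime_imp_coprime)
  obtain s where s: "[r * s = Suc 0] (mod M)" using cong_solve_coprime_nat[OF cop] by blast
  have red: "w [^]\<^bsub>W G C\<^esub> k = w [^]\<^bsub>W G C\<^esub> (k mod M)" for k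
  proof -
    have "w [^]\<^bsub>W G C\<^esub> k = w [^]\<^bsub>W G C\<^esub> (M * (k div M) + k mod M)" by simp
    also have "\<dots> = (w [^]\<^bsub>W G C\<^esub> M) [^]\<^bsub>W G C\<^esub> (k div M) \<otimes>\<^bsub>W G C\<^esub> w [^]\<^bsub>W G C\<^esub> (k mod M)"
      using monoid.nat_pow_mult[OF W_monoid w] monoid.nat_pow_pow[OF W_monoid w] by metis
    also have "\<dots> = w [^]\<^bsub>W G C\<^esub> (k mod M)"
      using wM M_def monoid.nat_pow_one[OF W_monoid] monoid.l_one[OF W_monoid W_pow_closed[OF w]] by simp
    finally show ?thesis .
  qed
  have "w [^]\<^bsub>W G C\<^esub> (s * r) = w"
  proof -
    have "w [^]\<^bsub>W G C\<^esub> (s * r) = w [^]\<^bsub>W G C\<^esub> ((r * s) mod M)" using red by (simp add: mult.commute)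
    also have "\<dots> = w [^]\<^bsub>W G C\<^esub> (Suc 0 mod M)" using s by (simp add: cong_def)
    also have "\<dots> = w [^]\<^bsub>W G C\<^esub> (Suc 0)" by (rule red[of "Suc 0", symmetric])
    also have "\<dots> = w" using monoid.l_one[OF W_monoid w] by simp
    finally show ?thesis .
  qed
  then have "w = (w [^]\<^bsub>W G C\<^esub> s) [^]\<^bsub>W G C\<^esub> r"
    using monoid.nat_pow_pow[OF W_monoid w] by simp
  then show ?thesis unfolding power_image_def using W_pow_closed[OF w] by blast
qed

lemma Tset_inv:
  assumes B: "finite B" and p: "p permutes B"
  shows "p ` {i\<in>B. P (least_power p i)} = {i\<in>B. P (least_power p i)}"
proof (rule permutes_inv_sub[OF p])
  show "finite {i\<in>B. P (least_power p i)}" using B by simp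
  have perm: "permutation p" using p B permutation_permutes by blast
  show "p ` {i\<in>B. P (least_power p i)} \<subseteq> {i\<in>B. P (least_power p i)}"
  proof
    fix j assume "j \<in> p ` {i\<in>B. P (least_power p i)}"
    then obtain i where i: "i \<in> B" "P (least_power p i)" "j = p i" by blast
    have "p i \<in> B" using p i(1) by (simp add: permutes_in_image)
    moreover have "least_power p (p i) = least_power p i" by (rule per_app[OF perm])
    ultimately show "j \<in> {i\<in>B. P (least_power p i)}" using i by simp
  qed
qed

lemma diff_inv:
  assumes p: "p permutes B" and T: "p ` T = T"
  shows "p ` (B - T) = B - T"
proof -
  have "inj p" using p by (rule permutes_inj)
  then have "p ` (B - T) = p ` B - p ` T" by (rule image_set_diff)
  then show ?thesis using T permutes_image[OF p] by simp
qed

lemma char: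
  assumes B: "finite B" and x: "x \<in> carrier (W G B)"
  shows "x \<in> Om B \<longleftrightarrow> res {i\<in>B. r dvd least_power (snd x) i} x \<in> Om {i\<in>B. r dvd least_power (snd x) i}"
proof -
  define T where "T = {i\<in>B. r dvd least_power (snd x) i}"
  have TB: "T \<subseteq> B" by (auto simp: T_def)
  have pB: "snd x permutes B" using x by (simp add: W_carrier)
  have pT: "snd x ` T = T" unfolding T_def by (rule Tset_inv[OF B pB])
  have pBT: "snd x ` (B - T) = B - T" by (rule diff_inv[OF pB pT])
  have "x \<in> Om B \<longleftrightarrow> res T x \<in> Om T"
  proof
    assume "x \<in> Om B"
    then obtain y where y: "y \<in> carrier (W G B)" "x = y [^]\<^bsub>W G B\<^esub> r"
      unfolding power_image_def by blast
    define \<sigma> where "\<sigma> = snd y"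
    have sB: "\<sigma> permutes B" using y by (simp add: W_carrier \<sigma>_def)
    have perm: "permutation \<sigma>" using sB B permutation_permutes by blast
    have sx: "snd x = \<sigma> ^^ r" using y by (simp add: W_pow_snd \<sigma>_def)
    have rpos: "r \<noteq> 0" using prime_r by auto
    have T': "T = {i\<in>B. r * r dvd least_power \<sigma> i}"
    proof -
      have "r dvd least_power (\<sigma> ^^ r) i \<longleftrightarrow> r * r dvd least_power \<sigma> i" for i
      proof (cases "r dvd least_power \<sigma> i")
        case True
        then obtain m where m: "least_power \<sigma> i = r * m" by blast
        show ?thesis using per_power_prime[OF perm prime_r, of i] True m rpos by simp
      next
        case False
        then have "\<not> r * r dvd least_power \<sigma> i" using dvd_mult_left by blast
        then show ?thesis using per_power_prime[OF perm prime_r, of i] False by simp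
      qed
      then show ?thesis unfolding T_def sx by simp
    qed
    have sT: "\<sigma> ` T = T" unfolding T' by (rule Tset_inv[OF B sB])
    have "res T x = res T y [^]\<^bsub>W G T\<^esub> r"
      using res_pow[OF y(1) TB] sT y(2) by (simp add: \<sigma>_def)
    moreover have "res T y \<in> carrier (W G T)" using res_carrier[OF y(1) TB] sT by (simp add: \<sigma>_def)
    ultimately show "res T x \<in> Om T" unfolding power_image_def by blast
  next
    assume "res T x \<in> Om T"
    then obtain z where z: "z \<in> carrier (W G T)" "res T x = z [^]\<^bsub>W G T\<^esub> r"
      unfolding power_image_def by blast
    define w where "w = res (B - T) x"
    have wc: "w \<in> carrier (W G (B - T))" unfolding w_def by (rule res_carrier[OF x _ pBT]) blast
    have "\<not> r dvd least_power (snd w) i" if "i \<in> B - T" for i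
    proof -
      have "least_power (snd w) i = least_power (snd x) i"
        unfolding w_def res_def using pBT that by (simp add: per_perm_restrict)
      then show ?thesis using that by (simp add: T_def)
    qed
    then have "w \<in> Om (B - T)" using Rtype_root[OF _ wc] B by simp
    then obtain v where v: "v \<in> carrier (W G (B - T))" "w = v [^]\<^bsub>W G (B - T)\<^esub> r"
      unfolding power_image_def by blast
    have d: "T \<inter> (B - T) = {}" by blast
    have U: "T \<union> (B - T) = B" using TB by blast
    define y where "y = glue T z v"
    note gp = glue_props[OF z(1) v(1) d, folded y_def, unfolded U]
    have "y [^]\<^bsub>W G B\<^esub> r = x"
    proof (rule W_ext[OF W_pow_closed[OF gp(1)] x TB])
      show "res T (y [^]\<^bsub>W G B\<^esub> r) = res T x"
        using res_pow[OF gp(1) TB gp(2)] gp(4) z(2) by simp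
      show "res (B - T) (y [^]\<^bsub>W G B\<^esub> r) = res (B - T) x"
        using res_pow[OF gp(1) _ gp(3)] gp(5) v(2) w_def by simp
    qed
    then show "x \<in> Om B" unfolding power_image_def using gp(1) by blast
  qed
  then show ?thesis by (simp add: T_def)
qed

definition D :: "nat set \<Rightarrow> ((nat \<Rightarrow> 'a) \<times> (nat \<Rightarrow> nat)) set" where
  "D T = {z \<in> Om T. \<forall>i\<in>T. r dvd least_power (snd z) i}"

definition WR :: "nat set \<Rightarrow> ((nat \<Rightarrow> 'a) \<times> (nat \<Rightarrow> nat)) set" where
  "WR C = {w \<in> carrier (W G C). \<forall>i\<in>C. \<not> r dvd least_power (snd w) i}"

definition Rp :: "nat set \<Rightarrow> (nat \<Rightarrow> nat) set" where
  "Rp C = {p. p permutes C \<and> (\<forall>i\<in>C. \<not> r dvd least_power p i)}"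

lemma card_WR:
  assumes C: "finite C" shows "card (WR C) = card (carrier G) ^ card C * card (Rp C)"
proof -
  have "WR C = (C \<rightarrow>\<^sub>E carrier G) \<times> Rp C"
    by (auto simp: WR_def Rp_def W_carrier)
  then have "card (WR C) = card (C \<rightarrow>\<^sub>E carrier G) * card (Rp C)"
    by (simp add: card_cartesian_product)
  also have "card (C \<rightarrow>\<^sub>E carrier G) = card (carrier G) ^ card C"
    using C by (simp add: card_PiE)
  finally show ?thesis .
qed

lemma count_Om:
  assumes B: "finite B"
  shows "card (Om B) = (\<Sum>T\<in>Pow B. card (D T) * card (WR (B - T)))"
proof -
  define Xs where "Xs T = {x \<in> Om B. {i\<in>B. r dvd least_power (snd x) i} = T}" for T
  have U: "Om B = (\<Union>T\<in>Pow B. Xs T)"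
  proof
    show "Om B \<subseteq> (\<Union>T\<in>Pow B. Xs T)"
    proof
      fix x assume x: "x \<in> Om B"
      have "{i\<in>B. r dvd least_power (snd x) i} \<in> Pow B" by blast
      moreover have "x \<in> Xs {i\<in>B. r dvd least_power (snd x) i}" using x by (simp add: Xs_def)
      ultimately show "x \<in> (\<Union>T\<in>Pow B. Xs T)" by blast
    qed
    show "(\<Union>T\<in>Pow B. Xs T) \<subseteq> Om B" by (auto simp: Xs_def)
  qed
  have finOm: "finite (Om B)" using finite_carrier_W[OF B] Om_sub finite_subset by blast
  have "card (Om B) = (\<Sum>T\<in>Pow B. card (Xs T))"
    unfolding U
  proof (rule card_UN_disjoint)
    show "finite (Pow B)" using B by simp
    show "\<forall>T\<in>Pow B. finite (Xs T)"
    proof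
      fix T show "finite (Xs T)" using finOm by (rule finite_subset[rotated]) (simp add: Xs_def)
    qed
    show "\<forall>T\<in>Pow B. \<forall>T'\<in>Pow B. T \<noteq> T' \<longrightarrow> Xs T \<inter> Xs T' = {}"
      unfolding Xs_def by blast
  qed
  also have "\<dots> = (\<Sum>T\<in>Pow B. card (D T) * card (WR (B - T)))"
  proof (rule sum.cong[OF refl])
    fix T assume "T \<in> Pow B"
    then have TB: "T \<subseteq> B" by simp
    have d: "T \<inter> (B - T) = {}" by blast
    have UT: "T \<union> (B - T) = B" using TB by blast
    have "bij_betw (\<lambda>x. (res T x, res (B - T) x)) (Xs T) (D T \<times> WR (B - T))"
    proof (rule bij_betw_byWitness[where f'="\<lambda>(z, w). glue T z w"])
      show "\<forall>x\<in>Xs T. (\<lambda>(z, w). glue T z w) (res T x, res (B - T) x) = x"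
      proof
        fix x assume xX: "x \<in> Xs T"
        then have x: "x \<in> carrier (W G B)" and xT: "{i\<in>B. r dvd least_power (snd x) i} = T"
          using Om_sub by (auto simp: Xs_def)
        have pB: "snd x permutes B" using x by (simp add: W_carrier)
        have pT: "snd x ` T = T" unfolding xT[symmetric] by (rule Tset_inv[OF B pB])
        have pBT: "snd x ` (B - T) = B - T" by (rule diff_inv[OF pB pT])
        have c1: "res T x \<in> carrier (W G T)" by (rule res_carrier[OF x TB pT])
        have c2: "res (B - T) x \<in> carrier (W G (B - T))" by (rule res_carrier[OF x _ pBT]) blast
        note gp = glue_props[OF c1 c2 d, unfolded UT]
        show "(\<lambda>(z, w). glue T z w) (res T x, res (B - T) x) = x"
          using W_ext[OF gp(1) x TB gp(4) gp(5)] by simp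
      qed
      show "\<forall>a\<in>D T \<times> WR (B - T). (\<lambda>x. (res T x, res (B - T) x)) ((\<lambda>(z, w). glue T z w) a) = a"
      proof
        fix a assume aa: "a \<in> D T \<times> WR (B - T)"
        obtain z w where a0: "a = (z, w)" by (cases a)
        have "z \<in> Om T" "w \<in> WR (B - T)" using aa a0 by (simp_all add: D_def)
        then have a: "a = (z, w)" "z \<in> carrier (W G T)" "w \<in> carrier (W G (B - T))"
          using a0 Om_sub[of T] by (auto simp: WR_def)
        note gp = glue_props[OF a(2) a(3) d, unfolded UT]
        show "(\<lambda>x. (res T x, res (B - T) x)) ((\<lambda>(z, w). glue T z w) a) = a"
          using gp(4) gp(5) a(1) by simp
      qed
      show "(\<lambda>x. (res T x, res (B - T) x)) ` Xs T \<subseteq> D T \<times> WR (B - T)"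
      proof
        fix b assume "b \<in> (\<lambda>x. (res T x, res (B - T) x)) ` Xs T"
        then obtain x where xX: "x \<in> Xs T" and b: "b = (res T x, res (B - T) x)" by blast
        then have x: "x \<in> carrier (W G B)" and xO: "x \<in> Om B" and xT: "{i\<in>B. r dvd least_power (snd x) i} = T"
          using Om_sub by (auto simp: Xs_def)
        have pB: "snd x permutes B" using x by (simp add: W_carrier)
        have pT: "snd x ` T = T" unfolding xT[symmetric] by (rule Tset_inv[OF B pB])
        have pBT: "snd x ` (B - T) = B - T" by (rule diff_inv[OF pB pT])
        have "res T x \<in> Om T" using char[OF B x] xO xT by simp
        moreover have "r dvd least_power (snd (res T x)) i" if "i \<in> T" for i
        proof -
          have "least_power (snd (res T x)) i = least_power (snd x) i"
            unfolding res_def using pT that by (simp add: per_perm_restrict)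
          then show ?thesis using that xT by auto
        qed
        ultimately have "res T x \<in> D T" by (simp add: D_def)
        moreover have "res (B - T) x \<in> WR (B - T)"
        proof -
          have "res (B - T) x \<in> carrier (W G (B - T))" by (rule res_carrier[OF x _ pBT]) blast
          moreover have "\<not> r dvd least_power (snd (res (B - T) x)) i" if "i \<in> B - T" for i
          proof -
            have "least_power (snd (res (B - T) x)) i = least_power (snd x) i"
              unfolding res_def using pBT that by (simp add: per_perm_restrict)
            then show ?thesis using that xT by auto
          qed
          ultimately show ?thesis by (simp add: WR_def)
        qed
        ultimately show "b \<in> D T \<times> WR (B - T)" using b by simp
      qed
      show "(\<lambda>(z, w). glue T z w) ` (D T \<times> WR (B - T)) \<subseteq> Xs T"
      proof
        fix y assume "y \<in> (\<lambda>(z, w). glue T z w) ` (D T \<times> WR (B - T))"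
        then obtain a where aa: "a \<in> D T \<times> WR (B - T)" and ya: "y = (\<lambda>(z, w). glue T z w) a" by blast
        obtain z w where a0: "a = (z, w)" by (cases a)
        have zD: "z \<in> D T" and wW: "w \<in> WR (B - T)" and y: "y = glue T z w" using aa ya a0 by simp_all
        have "z \<in> Om T" using zD by (simp add: D_def)
        then have z: "z \<in> carrier (W G T)" using Om_sub[of T] by blast
        have w: "w \<in> carrier (W G (B - T))" using wW by (simp add: WR_def)
        note gp = glue_props[OF z w d, folded y, unfolded UT]
        have pers: "{i\<in>B. r dvd least_power (snd y) i} = T"
        proof -
          have "r dvd least_power (snd y) i \<longleftrightarrow> i \<in> T" if "i \<in> B" for i
          proof (cases "i \<in> T")
            case True
            have "least_power (snd y) i = least_power (perm_restrict (snd y) T) i"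
              using gp(2) True by (simp add: per_perm_restrict)
            also have "perm_restrict (snd y) T = snd z" using gp(4) by (simp add: res_def prod_eq_iff)
            finally show ?thesis using zD True by (simp add: D_def)
          next
            case False
            then have iBT: "i \<in> B - T" using that by blast
            have "least_power (snd y) i = least_power (perm_restrict (snd y) (B - T)) i"
              using gp(3) iBT by (simp add: per_perm_restrict)
            also have "perm_restrict (snd y) (B - T) = snd w" using gp(5) by (simp add: res_def prod_eq_iff)
            finally show ?thesis using wW iBT False by (simp add: WR_def)
          qed
          then show ?thesis using TB by auto
        qed
        have "res T y \<in> Om T" using gp(4) zD by (simp add: D_def)
        then have "y \<in> Om B" using char[OF B gp(1)] pers by simp
        then show "y \<in> Xs T" using pers by (simp add: Xs_def)
      qed
    qed
    then have "card (Xs T) = card (D T \<times> WR (B - T))" by (rule bij_betw_same_card)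
    then show "card (Xs T) = card (D T) * card (WR (B - T))" by (simp add: card_cartesian_product)
  qed
  finally show ?thesis .
qed

end



definition RP :: "nat \<Rightarrow> nat set \<Rightarrow> (nat \<Rightarrow> nat) set" where
  "RP r C = {p. p permutes C \<and> (\<forall>i\<in>C. \<not> r dvd least_power p i)}"

lemma funpow_agree:
  assumes "\<forall>i\<in>S. p i = f i" "f ` S \<subseteq> S" "i \<in> S"
  shows "(p ^^ n) i = (f ^^ n) i \<and> (f ^^ n) i \<in> S"
proof (induction n)
  case (Suc n)
  then show ?case using assms by auto
qed (use assms in simp)

lemma cyc_nth:
  assumes "distinct cs" "cs \<noteq> []"
  shows "(cycle_of_list cs ^^ n) (hd cs) = cs ! (n mod length cs)"
proof -
  have "map (cycle_of_list cs ^^ n) cs = rotate n cs" by (rule cyclic_rotation[OF assms(1)])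
  then have "(map (cycle_of_list cs ^^ n) cs) ! 0 = rotate n cs ! 0" by simp
  then show ?thesis using assms(2) by (simp add: nth_rotate hd_conv_nth)
qed

lemma least_power_cong:
  assumes "\<And>n. (p ^^ n) i = (q ^^ n) i" shows "least_power p i = least_power q i"
  unfolding least_power_def using assms by simp

lemma glue_cyc:
  assumes d: "distinct (a # s)" and q: "q permutes X" and X: "finite X"
    and dj: "X \<inter> set (a # s) = {}"
  defines "p \<equiv> cycle_of_list (a # s) \<circ> q"
  shows "p permutes (set (a # s) \<union> X)"
    and "\<And>i. i \<in> set (a # s) \<Longrightarrow> least_power p i = Suc (length s)"
    and "\<And>i. i \<in> X \<Longrightarrow> least_power p i = least_power q i"
    and "tl (support p a) = s"
    and "perm_restrict p X = q"
proof -
  define cs where "cs = a # s"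
  define cyc where "cyc = cycle_of_list cs"
  have pc: "p = cyc \<circ> q" by (simp add: p_def cyc_def cs_def)
  have cycp: "cyc permutes set cs" unfolding cyc_def by (rule cycle_permutes)
  have dcs: "distinct cs" using d by (simp add: cs_def)
  have len: "length cs = Suc (length s)" by (simp add: cs_def)
  have hd: "hd cs = a" "cs \<noteq> []" by (simp_all add: cs_def)
  show pp: "p permutes (set (a # s) \<union> X)"
    unfolding pc using cycp q by (metis cs_def permutes_compose permutes_subset sup_ge1 sup_ge2)
  have perm: "permutation p" using pp X permutation_permutes by blast
  have ag1: "\<forall>i\<in>set cs. p i = cyc i"
  proof
    fix i assume "i \<in> set cs"
    then have "i \<notin> X" using dj by (auto simp: cs_def)
    then show "p i = cyc i" using q by (simp add: pc permutes_not_in)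
  qed
  have cyc_inv: "cyc ` set cs \<subseteq> set cs" using cycp by (simp add: permutes_image)
  have pa: "(p ^^ n) a = cs ! (n mod length cs)" for n
  proof -
    have "a \<in> set cs" by (simp add: cs_def)
    then have "(p ^^ n) a = (cyc ^^ n) a" using funpow_agree[OF ag1 cyc_inv] by blast
    also have "\<dots> = cs ! (n mod length cs)" using cyc_nth[OF dcs hd(2), of n] hd by (simp add: cyc_def)
    finally show ?thesis .
  qed
  have lpa: "least_power p a = length cs"
  proof (rule dvd_unique_nat)
    fix n
    have "least_power p a dvd n \<longleftrightarrow> (p ^^ n) a = a" by (rule per_dvd_iff[OF perm])
    also have "\<dots> \<longleftrightarrow> cs ! (n mod length cs) = cs ! 0" using pa hd by (simp add: hd_conv_nth)
    also have "\<dots> \<longleftrightarrow> n mod length cs = 0"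
      using nth_eq_iff_index_eq[OF dcs, of "n mod length cs" 0] hd(2) by simp
    also have "\<dots> \<longleftrightarrow> length cs dvd n" by (simp add: dvd_eq_mod_eq_0)
    finally show "least_power p a dvd n \<longleftrightarrow> length cs dvd n" .
  qed
  show "least_power p i = Suc (length s)" if "i \<in> set (a # s)" for i
  proof -
    have "i \<in> set cs" using that by (simp add: cs_def)
    then obtain k where k: "k < length cs" "cs ! k = i" unfolding in_set_conv_nth by blast
    have "(p ^^ k) a = i" using pa k by simp
    then have "least_power p i = least_power p a" using per_funpow_pt[OF perm, of k a] by simp
    then show ?thesis using lpa len by simp
  qed
  have ag2: "\<forall>i\<in>X. p i = q i"
  proof
    fix i assume "i \<in> X"
    then have "q i \<in> X" using q by (simp add: permutes_in_image)
    then have "q i \<notin> set cs" using dj by (auto simp: cs_def)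
    then show "p i = q i" by (simp add: pc cyc_def id_outside_supp)
  qed
  have q_inv: "q ` X \<subseteq> X" using q by (simp add: permutes_image)
  show "least_power p i = least_power q i" if "i \<in> X" for i
    using funpow_agree[OF ag2 q_inv that] by (intro least_power_cong) blast
  have "support p a = map (\<lambda>i. cs ! i) [0..<length cs]"
    using lpa pa by simp
  also have "\<dots> = cs" by (rule map_nth)
  finally show "tl (support p a) = s" by (simp add: cs_def)
  show "perm_restrict p X = q"
  proof (rule ext)
    fix i show "perm_restrict p X i = q i"
      using ag2 q by (cases "i \<in> X") (simp_all add: perm_restrict_simps permutes_not_in)
  qed
qed

lemma decomp_cyc:
  assumes p: "p permutes C" and C: "finite C" and a: "a \<in> C"
  defines "cs \<equiv> support p a"
  shows "cs = a # tl cs" "distinct cs" "set cs \<subseteq> C" "p ` set cs = set cs"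
    "perm_restrict p (C - set cs) permutes (C - set cs)"
    "p = cycle_of_list cs \<circ> perm_restrict p (C - set cs)"
    "least_power p a = length cs"
proof -
  have perm: "permutation p" using p C permutation_permutes by blast
  have lp: "least_power p a > 0" by (rule per_pos[OF perm])
  show "least_power p a = length cs" by (simp add: cs_def)
  show "cs = a # tl cs" using lp by (simp add: cs_def upt_conv_Cons)
  show "distinct cs" unfolding cs_def by (rule cycle_of_permutation[OF perm])
  have fp: "(p ^^ n) a \<in> C" for n using a p by (induction n) (simp_all add: permutes_in_image)
  show sC: "set cs \<subseteq> C" using fp by (auto simp: cs_def)
  have "p ` set cs \<subseteq> set cs"
  proof
    fix j assume "j \<in> p ` set cs"
    then obtain i where "i \<in> set cs" "j = p i" by blast
    then obtain n where "i = (p ^^ n) a" using support_set[OF perm, of a] by (auto simp: cs_def)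
    then have "j = (p ^^ Suc n) a" using \<open>j = p i\<close> by simp
    then have "j \<in> range (\<lambda>i. (p ^^ i) a)" by (rule ssubst) (rule rangeI)
    then show "j \<in> set cs" unfolding cs_def support_set[OF perm] .
  qed
  then show inv: "p ` set cs = set cs" using permutes_inv_sub[OF p] by simp
  have inv2: "p ` (C - set cs) = C - set cs"
  proof -
    have "inj p" using p by (rule permutes_inj)
    then have "p ` (C - set cs) = p ` C - p ` set cs" by (rule image_set_diff)
    then show ?thesis using inv permutes_image[OF p] by simp
  qed
  show "perm_restrict p (C - set cs) permutes (C - set cs)" by (rule perm_restrict_permutes[OF p inv2])
  show "p = cycle_of_list cs \<circ> perm_restrict p (C - set cs)"
  proof (rule ext)
    fix i
    show "p i = (cycle_of_list cs \<circ> perm_restrict p (C - set cs)) i"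
    proof (cases "i \<in> set cs")
      case True
      then show ?thesis using cycle_restrict[OF perm, of i a] by (simp add: perm_restrict_simps cs_def)
    next
      case False
      show ?thesis
      proof (cases "i \<in> C")
        case True
        then have "p i \<in> C - set cs" using inv2 False by blast
        then show ?thesis using True False by (simp add: perm_restrict_simps id_outside_supp)
      next
        case False2: False
        then have "p i = i" using p by (simp add: permutes_not_in)
        then show ?thesis using False False2 by (simp add: perm_restrict_simps id_outside_supp)
      qed
    qed
  qed
qed

lemma finite_RP: "finite X \<Longrightarrow> finite (RP r X)"
  by (rule finite_subset[OF _ finite_permutations[of X]]) (auto simp: RP_def)

lemma card_RP_step:
  assumes C: "finite C" and a: "a \<in> C"
  shows "card (RP r C) = (\<Sum>s\<in>{s. distinct (a # s) \<and> set s \<subseteq> C \<and> \<not> r dvd Suc (length s)}. card (RP r (C - set (a # s))))"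
proof -
  define L where "L = {s. distinct (a # s) \<and> set s \<subseteq> C \<and> \<not> r dvd Suc (length s)}"
  define F :: "nat list \<Rightarrow> (nat \<Rightarrow> nat) \<Rightarrow> nat \<Rightarrow> nat" where "F s q = cycle_of_list (a # s) \<circ> q" for s q
  have GC: "F s q permutes C \<and> (\<forall>i\<in>set (a # s). least_power (F s q) i = Suc (length s))
      \<and> (\<forall>i\<in>C - set (a # s). least_power (F s q) i = least_power q i)
      \<and> tl (support (F s q) a) = s \<and> perm_restrict (F s q) (C - set (a # s)) = q"
    if sL: "s \<in> L" and qp: "q permutes (C - set (a # s))" for s q
  proof -
    have d: "distinct (a # s)" and sC: "set s \<subseteq> C" using sL by (simp_all add: L_def)
    have fX: "finite (C - set (a # s))" using C by simp
    have dj: "(C - set (a # s)) \<inter> set (a # s) = {}" by blast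
    have U: "set (a # s) \<union> (C - set (a # s)) = C" using a sC by auto
    note gc = glue_cyc[OF d qp fX dj, folded F_def, unfolded U]
    show ?thesis using gc by blast
  qed
  have U: "RP r C = (\<Union>s\<in>L. F s ` RP r (C - set (a # s)))"
  proof
    show "RP r C \<subseteq> (\<Union>s\<in>L. F s ` RP r (C - set (a # s)))"
    proof
      fix p assume pR: "p \<in> RP r C"
      then have p: "p permutes C" and nd: "\<forall>i\<in>C. \<not> r dvd least_power p i" by (simp_all add: RP_def)
      note dc = decomp_cyc[OF p C a]
      define s where "s = tl (support p a)"
      have cs: "support p a = a # s" using dc(1) s_def by simp
      define q where "q = perm_restrict p (C - set (a # s))"
      have inv2: "p ` (C - set (a # s)) = C - set (a # s)"
      proof -
        have "inj p" using p by (rule permutes_inj)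
        then have "p ` (C - set (a # s)) = p ` C - p ` set (a # s)" by (rule image_set_diff)
        then show ?thesis using dc(4) permutes_image[OF p] cs by simp
      qed
      have sL: "s \<in> L"
      proof -
        have "distinct (a # s)" using dc(2) cs by simp
        moreover have "set s \<subseteq> C" using dc(3) cs by simp
        moreover have "least_power p a = Suc (length s)" using dc(7) cs by simp
        then have "\<not> r dvd Suc (length s)" using nd a by metis
        ultimately show ?thesis by (simp add: L_def)
      qed
      have qR: "q \<in> RP r (C - set (a # s))"
      proof -
        have "q permutes (C - set (a # s))" using dc(5) cs by (simp add: q_def)
        moreover have "\<not> r dvd least_power q i" if "i \<in> C - set (a # s)" for i
        proof -
          have "least_power q i = least_power p i" unfolding q_def using inv2 that by (simp add: per_perm_restrict)
          then show ?thesis using nd that by simp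
        qed
        ultimately show ?thesis by (simp add: RP_def)
      qed
      have "p = F s q" using dc(6) cs by (simp add: F_def q_def)
      then show "p \<in> (\<Union>s\<in>L. F s ` RP r (C - set (a # s)))" using sL qR by blast
    qed
    show "(\<Union>s\<in>L. F s ` RP r (C - set (a # s))) \<subseteq> RP r C"
    proof
      fix p assume "p \<in> (\<Union>s\<in>L. F s ` RP r (C - set (a # s)))"
      then obtain s q where sL: "s \<in> L" and qR: "q \<in> RP r (C - set (a # s))" and pq: "p = F s q" by blast
      have qp: "q permutes (C - set (a # s))" using qR by (simp add: RP_def)
      note gc = GC[OF sL qp, folded pq]
      have "\<not> r dvd least_power p i" if "i \<in> C" for i
      proof (cases "i \<in> set (a # s)")
        case True
        then have "least_power p i = Suc (length s)" using gc by blast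
        then show ?thesis using sL by (simp add: L_def)
      next
        case False then show ?thesis using gc qR that by (simp add: RP_def)
      qed
      then show "p \<in> RP r C" using gc by (simp add: RP_def)
    qed
  qed
  have finL: "finite L"
  proof (rule finite_subset[OF _ finite_lists_length_le[OF C, of "card C"]])
    show "L \<subseteq> {xs. set xs \<subseteq> C \<and> length xs \<le> card C}"
    proof
      fix s assume "s \<in> L"
      then have "distinct s" "set s \<subseteq> C" by (simp_all add: L_def)
      then have "length s = card (set s)" "card (set s) \<le> card C"
        using card_mono[OF C \<open>set s \<subseteq> C\<close>] distinct_card[of s] by simp_all
      then show "s \<in> {xs. set xs \<subseteq> C \<and> length xs \<le> card C}"
        using \<open>set s \<subseteq> C\<close> by simp
    qed
  qed
  have "card (RP r C) = (\<Sum>s\<in>L. card (F s ` RP r (C - set (a # s))))"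
    unfolding U
  proof (rule card_UN_disjoint[OF finL])
    show "\<forall>s\<in>L. finite (F s ` RP r (C - set (a # s)))" using C by (simp add: finite_RP)
    show "\<forall>s\<in>L. \<forall>s'\<in>L. s \<noteq> s' \<longrightarrow> F s ` RP r (C - set (a # s)) \<inter> F s' ` RP r (C - set (a # s')) = {}"
    proof (intro ballI impI)
      fix s s' assume sL: "s \<in> L" and sL': "s' \<in> L" and ne: "s \<noteq> s'"
      show "F s ` RP r (C - set (a # s)) \<inter> F s' ` RP r (C - set (a # s')) = {}"
      proof (rule ccontr)
        assume "F s ` RP r (C - set (a # s)) \<inter> F s' ` RP r (C - set (a # s')) \<noteq> {}"
        then obtain q q' where q: "q \<in> RP r (C - set (a # s))" and q': "q' \<in> RP r (C - set (a # s'))"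
          and e: "F s q = F s' q'" by blast
        have "q permutes (C - set (a # s))" "q' permutes (C - set (a # s'))" using q q' by (simp_all add: RP_def)
        then have "tl (support (F s q) a) = s" "tl (support (F s' q') a) = s'"
          using GC[OF sL] GC[OF sL'] by blast+
        then show False using e ne by simp
      qed
    qed
  qed
  also have "\<dots> = (\<Sum>s\<in>L. card (RP r (C - set (a # s))))"
  proof (rule sum.cong[OF refl])
    fix s assume sL: "s \<in> L"
    have "inj_on (F s) (RP r (C - set (a # s)))"
    proof (rule inj_onI)
      fix q q' assume q: "q \<in> RP r (C - set (a # s))" and q': "q' \<in> RP r (C - set (a # s))"
        and e: "F s q = F s q'"
      have "q permutes (C - set (a # s))" "q' permutes (C - set (a # s))" using q q' by (simp_all add: RP_def)
      then have "perm_restrict (F s q) (C - set (a # s)) = q" "perm_restrict (F s q') (C - set (a # s)) = q'"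
        using GC[OF sL] by blast+
      then show "q = q'" using e by simp
    qed
    then show "card (F s ` RP r (C - set (a # s))) = card (RP r (C - set (a # s)))" by (rule card_image)
  qed
  finally show ?thesis by (simp add: L_def)
qed

lemma sum_lists_by_length:
  assumes X: "finite X"
  shows "(\<Sum>s\<in>{s. distinct s \<and> set s \<subseteq> X \<and> P (length s)}. g (length s))
       = (\<Sum>k\<le>card X. if P k then \<Prod>{card X - k + 1 .. card X} * g k else 0)"
proof -
  define Lk where "Lk k = {s. length s = k \<and> distinct s \<and> set s \<subseteq> X}" for k
  define K where "K = {k\<in>{..card X}. P k}"
  have U: "{s. distinct s \<and> set s \<subseteq> X \<and> P (length s)} = (\<Union>(Lk ` K))"
  proof
    show "{s. distinct s \<and> set s \<subseteq> X \<and> P (length s)} \<subseteq> \<Union>(Lk ` K)"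
    proof
      fix s assume "s \<in> {s. distinct s \<and> set s \<subseteq> X \<and> P (length s)}"
      then have s: "distinct s" "set s \<subseteq> X" "P (length s)" by simp_all
      then have "length s = card (set s)" "card (set s) \<le> card X"
        using card_mono[OF X s(2)] distinct_card[of s] by simp_all
      then have "length s \<in> K" using s(3) by (simp add: K_def)
      moreover have "s \<in> Lk (length s)" using s by (simp add: Lk_def)
      ultimately show "s \<in> \<Union>(Lk ` K)" by blast
    qed
    show "\<Union>(Lk ` K) \<subseteq> {s. distinct s \<and> set s \<subseteq> X \<and> P (length s)}"
      by (auto simp: Lk_def K_def)
  qed
  have fin: "\<forall>k\<in>K. finite (Lk k)"
  proof
    fix k show "finite (Lk k)"
      by (rule finite_subset[OF _ finite_lists_length_eq[OF X, of k]]) (auto simp: Lk_def)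
  qed
  have "(\<Sum>s\<in>{s. distinct s \<and> set s \<subseteq> X \<and> P (length s)}. g (length s))
      = (\<Sum>k\<in>K. \<Sum>s\<in>Lk k. g (length s))"
    unfolding U by (rule sum.UNION_disjoint[OF _ fin]) (auto simp: K_def Lk_def)
  also have "\<dots> = (\<Sum>k\<in>K. \<Prod>{card X - k + 1 .. card X} * g k)"
  proof (rule sum.cong[OF refl])
    fix k assume "k \<in> K"
    then have kX: "k \<le> card X" by (simp add: K_def)
    have "(\<Sum>s\<in>Lk k. g (length s)) = (\<Sum>s\<in>Lk k. g k)" by (rule sum.cong) (auto simp: Lk_def)
    also have "\<dots> = card (Lk k) * g k" by simp
    also have "card (Lk k) = \<Prod>{card X - k + 1 .. card X}"
      unfolding Lk_def by (rule card_lists_distinct_length_eq[OF X kX])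
    finally show "(\<Sum>s\<in>Lk k. g (length s)) = \<Prod>{card X - k + 1 .. card X} * g k" .
  qed
  also have "\<dots> = (\<Sum>k\<le>card X. if P k then \<Prod>{card X - k + 1 .. card X} * g k else 0)"
    unfolding K_def by (rule sum.inter_filter) simp
  finally show ?thesis .
qed

definition rho :: "nat \<Rightarrow> nat \<Rightarrow> nat" where
  "rho r m = card (RP r {0..<m})"

definition Phi :: "nat \<Rightarrow> nat \<Rightarrow> nat" where
  "Phi r m = (\<Sum>k\<le>m. if \<not> r dvd Suc k then \<Prod>{m - k + 1 .. m} * rho r (m - k) else 0)"

lemma card_RP_rho_aux:
  "\<forall>C. finite C \<and> card C = n \<longrightarrow> card (RP r C) = rho r n \<and> (n > 0 \<longrightarrow> card (RP r C) = Phi r (n - 1))"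
proof (induction n rule: less_induct)
  case (less n)
  show ?case
  proof (cases n)
    case 0
    then show ?thesis by (auto simp: rho_def)
  next
    case (Suc m)
    have step: "card (RP r C) = Phi r m" if C: "finite C" and cC: "card C = Suc m" for C
    proof -
      obtain a where a: "a \<in> C" using cC by (metis card.empty ex_in_conv nat.distinct(1))
      have cX: "card (C - {a}) = m" using cC a C by simp
      have L: "{s. distinct (a # s) \<and> set s \<subseteq> C \<and> \<not> r dvd Suc (length s)}
          = {s. distinct s \<and> set s \<subseteq> C - {a} \<and> \<not> r dvd Suc (length s)}" by auto
      have "card (RP r C) = (\<Sum>s\<in>{s. distinct s \<and> set s \<subseteq> C - {a} \<and> \<not> r dvd Suc (length s)}.
            card (RP r (C - set (a # s))))"
        using card_RP_step[OF C a, of r] L by simp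
      also have "\<dots> = (\<Sum>s\<in>{s. distinct s \<and> set s \<subseteq> C - {a} \<and> \<not> r dvd Suc (length s)}.
            rho r (m - length s))"
      proof (rule sum.cong[OF refl])
        fix s assume "s \<in> {s. distinct s \<and> set s \<subseteq> C - {a} \<and> \<not> r dvd Suc (length s)}"
        then have s: "distinct s" "set s \<subseteq> C - {a}" by simp_all
        have "C - set (a # s) = C - {a} - set s" by auto
        then have "card (C - set (a # s)) = card (C - {a} - set s)" by (rule arg_cong)
        also have "\<dots> = card (C - {a}) - card (set s)"
          using s C by (intro card_Diff_subset) (simp_all add: finite_subset)
        also have "\<dots> = m - length s" using cX distinct_card[OF s(1)] by simp
        finally have cc: "card (C - set (a # s)) = m - length s" .
        have "m - length s < n" using Suc by simp
        then show "card (RP r (C - set (a # s))) = rho r (m - length s)"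
          using less.IH[of "m - length s"] C cc by simp
      qed
      also have "\<dots> = Phi r m"
      proof -
        have fC: "finite (C - {a})" using C by simp
        show ?thesis
          unfolding Phi_def using sum_lists_by_length[where X="C - {a}" and P="\<lambda>k. \<not> r dvd Suc k" and g="\<lambda>k. rho r (m - k)", OF fC, unfolded cX]
          by simp
      qed
      finally show ?thesis .
    qed
    have "rho r n = Phi r m" unfolding rho_def using step[of "{0..<Suc m}"] Suc by simp
    then show ?thesis using step Suc by simp
  qed
qed

lemma card_RP_rho: "finite C \<Longrightarrow> card (RP r C) = rho r (card C)"
  using card_RP_rho_aux by blast

lemma rho_Suc: "rho r (Suc m) = Phi r m"
  using card_RP_rho_aux[of "Suc m" r] by (metis card_atLeastLessThan diff_Suc_1 diff_zero finite_atLeastLessThan zero_less_Suc)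

definition cc :: "nat \<Rightarrow> nat \<Rightarrow> real" where
  "cc r n = real (rho r n) / fact n"

lemma Phi_real:
  "real (Phi r m) / fact m = (\<Sum>k\<le>m. if \<not> r dvd Suc k then cc r (m - k) else 0)"
proof -
  have "real (Phi r m) / fact m = (\<Sum>k\<le>m. real (if \<not> r dvd Suc k then \<Prod>{m - k + 1 .. m} * rho r (m - k) else 0) / fact m)"
    unfolding Phi_def of_nat_sum sum_divide_distrib ..
  also have "\<dots> = (\<Sum>k\<le>m. if \<not> r dvd Suc k then cc r (m - k) else 0)"
  proof (rule sum.cong[OF refl])
    fix k assume "k \<in> {..m}"
    then have km: "m - k \<le> m" by simp
    have f: "(fact m :: real) = fact (m - k) * real (\<Prod>{Suc (m - k)..m})"
      using arg_cong[OF fact_eq_fact_times[OF km], of "of_nat :: nat \<Rightarrow> real"] by (simp add: of_nat_fact)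
    have p0: "real (\<Prod>{Suc (m - k)..m}) \<noteq> 0" by (simp add: prod_zero_iff)
    have "real (\<Prod>{m - k + 1 .. m} * rho r (m - k)) / fact m = cc r (m - k)"
      unfolding cc_def f using p0 by (simp add: field_simps)
    then show "real (if \<not> r dvd Suc k then \<Prod>{m - k + 1 .. m} * rho r (m - k) else 0) / fact m
        = (if \<not> r dvd Suc k then cc r (m - k) else 0)" by simp
  qed
  finally show ?thesis .
qed

lemma cc_rec: "real n * cc r n = (\<Sum>j<n. if r dvd (n - j) then 0 else cc r j)"
proof (cases n)
  case 0 then show ?thesis by simp
next
  case (Suc m)
  have nz: "real (Suc m) \<noteq> 0" by (simp del: of_nat_Suc)
  have "real (Suc m) * cc r (Suc m) = real (rho r (Suc m)) / fact m"
    unfolding cc_def fact_Suc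
    by (simp only: times_divide_eq_right nonzero_mult_divide_mult_cancel_left[OF nz])
  also have "\<dots> = (\<Sum>k\<le>m. if \<not> r dvd Suc k then cc r (m - k) else 0)"
    unfolding rho_Suc by (rule Phi_real)
  also have "\<dots> = (\<Sum>i<Suc m. (\<lambda>j. if r dvd (Suc m - j) then 0 else cc r j) (Suc m - Suc i))"
  proof (rule sum.cong)
    show "{..m} = {..<Suc m}" by auto
  next
    fix i assume "i \<in> {..<Suc m}"
    then have "Suc m - (m - i) = Suc i" by simp
    then show "(if \<not> r dvd Suc i then cc r (m - i) else 0)
        = (\<lambda>j. if r dvd (Suc m - j) then 0 else cc r j) (Suc m - Suc i)" by simp
  qed
  also have "\<dots> = (\<Sum>j<Suc m. if r dvd (Suc m - j) then 0 else cc r j)"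
    by (rule sum.nat_diff_reindex)
  finally show ?thesis using Suc by simp
qed

lemma cc_step_aux: "\<forall>n. n \<le> N \<longrightarrow> \<not> r dvd n \<longrightarrow> cc r n = cc r (n - 1)"
proof (induction N)
  case 0 then show ?case by simp
next
  case (Suc N)
  show ?case
  proof (intro allI impI)
    fix n assume nN: "n \<le> Suc N" and nd: "\<not> r dvd n"
    show "cc r n = cc r (n - 1)"
    proof (cases "n \<le> N")
      case True then show ?thesis using Suc.IH nd by blast
    next
      case False
      then have n: "n = Suc N" using nN by simp
      define m where "m = N"
      have IH: "\<And>j. j \<le> m \<Longrightarrow> \<not> r dvd j \<Longrightarrow> cc r j = cc r (j - 1)" using Suc.IH m_def by blast
      define Q where "Q k = (\<Sum>j<k. if r dvd (k - j) then cc r j else 0)" for k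
      define Tot where "Tot k = (\<Sum>j<k. cc r j)" for k
      have split: "real k * cc r k = Tot k - Q k" for k
      proof -
        have "real k * cc r k = (\<Sum>j<k. cc r j - (if r dvd (k - j) then cc r j else 0))"
          unfolding cc_rec by (rule sum.cong) auto
        then show ?thesis unfolding Tot_def Q_def by (simp add: sum_subtractf)
      qed
      have ndS: "\<not> r dvd Suc m" using nd n m_def by simp
      have "Q (Suc m) = (if r dvd (Suc m - 0) then cc r 0 else 0)
          + (\<Sum>j<m. if r dvd (Suc m - Suc j) then cc r (Suc j) else 0)"
        unfolding Q_def by (rule sum.lessThan_Suc_shift)
      also have "\<dots> = (\<Sum>j<m. if r dvd (m - j) then cc r j else 0)"
      proof -
        have "(\<Sum>j<m. if r dvd (Suc m - Suc j) then cc r (Suc j) else 0)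
            = (\<Sum>j<m. if r dvd (m - j) then cc r j else 0)"
        proof (rule sum.cong[OF refl])
          fix j assume "j \<in> {..<m}"
          then have jm: "j < m" by simp
          show "(if r dvd (Suc m - Suc j) then cc r (Suc j) else 0) = (if r dvd (m - j) then cc r j else 0)"
          proof (cases "r dvd (m - j)")
            case True
            have "Suc m = Suc j + (m - j)" using jm by simp
            then have "\<not> r dvd Suc j" using True ndS by (metis dvd_add_left_iff)
            then have "cc r (Suc j) = cc r j" using IH[of "Suc j"] jm by simp
            then show ?thesis using True by simp
          next
            case False then show ?thesis by simp
          qed
        qed
        then show ?thesis using ndS by simp
      qed
      finally have QQ: "Q (Suc m) = Q m" unfolding Q_def .
      have TT: "Tot (Suc m) = Tot m + cc r m" unfolding Tot_def by simp
      have "real (Suc m) * cc r (Suc m) = real (Suc m) * cc r m"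
        using split[of "Suc m"] split[of m] QQ TT by (simp add: algebra_simps)
      then have "cc r (Suc m) = cc r m" by simp
      then show ?thesis using n m_def by simp
    qed
  qed
qed

lemma rho_mult:
  assumes "\<not> r dvd n" shows "rho r n = n * rho r (n - 1)"
proof -
  have n0: "n > 0" using assms by (cases n) auto
  have "cc r n = cc r (n - 1)" using cc_step_aux[of n r] assms by simp
  then have "real (rho r n) / fact n = real (rho r (n - 1)) / fact (n - 1)" by (simp add: cc_def)
  moreover have "(fact n :: real) = real n * fact (n - 1)" using n0 by (metis fact_num_eq_if not_gr0)
  ultimately have "real (rho r n) = real n * real (rho r (n - 1))"
    using n0 by (simp add: field_simps)
  then show ?thesis by (metis of_nat_eq_iff of_nat_mult)
qed

lemma dvd_card_all_periods_aux:
  assumes p: "p permutes T" and T: "finite T" and all: "\<forall>i\<in>T. r dvd least_power p i"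
  shows "\<forall>U. card U = n \<longrightarrow> U \<subseteq> T \<longrightarrow> p ` U = U \<longrightarrow> r dvd card U"
proof (induction n rule: less_induct)
  case (less n)
  show ?case
  proof (intro allI impI)
    fix U assume cU: "card U = n" and UT: "U \<subseteq> T" and pU: "p ` U = U"
    show "r dvd card U"
    proof (cases "U = {}")
      case True then show ?thesis by simp
    next
      case False
      then obtain a where aU: "a \<in> U" by blast
      have perm: "permutation p" using p T permutation_permutes by blast
      define S where "S = set (support p a)"
      note dc = decomp_cyc[OF p T, of a]
      have aT: "a \<in> T" using aU UT by blast
      have fpU: "(p ^^ k) a \<in> U" for k
      proof (induction k)
        case (Suc k) then show ?case using pU by auto
      qed (use aU in simp)
      have SU: "S \<subseteq> U" unfolding S_def using fpU by auto
      have "card S = length (support p a)" unfolding S_def by (rule distinct_card[OF dc(2)[OF aT]])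
      also have "\<dots> = least_power p a" by (rule dc(7)[OF aT, symmetric])
      finally have cS: "card S = least_power p a" .
      have pS: "p ` S = S" unfolding S_def using dc(4)[OF aT] .
      have pUS: "p ` (U - S) = U - S"
      proof -
        have "inj p" using p by (rule permutes_inj)
        then have "p ` (U - S) = p ` U - p ` S" by (rule image_set_diff)
        then show ?thesis using pU pS by simp
      qed
      have finU: "finite U" using UT T finite_subset by blast
      have "a \<in> S" unfolding S_def using per_pos[OF perm, of a] by (simp add: image_iff) (metis funpow_0 atLeastLessThan_iff le0)
      then have "U - S \<subset> U" using aU by blast
      then have cUS: "card (U - S) < n" using cU psubset_card_mono[OF finU] by blast
      have "r dvd card (U - S)" using less.IH[OF cUS] UT pUS by blast
      moreover have "r dvd card S" using cS all aT by simp
      moreover have "card U = card S + card (U - S)"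
        using finU SU by (metis card_Diff_subset card_mono finite_subset le_add_diff_inverse)
      ultimately show ?thesis by simp
    qed
  qed
qed

lemma dvd_card_all_periods:
  assumes "p permutes T" "finite T" "\<forall>i\<in>T. r dvd least_power p i"
  shows "r dvd card T"
  using dvd_card_all_periods_aux[OF assms, of "card T"] permutes_image[OF assms(1)] by blast




definition tr :: "(nat \<Rightarrow> nat) \<Rightarrow> nat set \<Rightarrow> (nat \<Rightarrow> 'a) \<times> (nat \<Rightarrow> nat) \<Rightarrow> (nat \<Rightarrow> 'a) \<times> (nat \<Rightarrow> nat)" where
  "tr h A x = ((\<lambda>i\<in>h ` A. fst x (h i)), h \<circ> snd x \<circ> h)"

lemma invol_image: "(\<And>x. h (h x) = x) \<Longrightarrow> h ` (h ` A) = A"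
  by (simp add: image_comp comp_def)

lemma invol_mem: "(\<And>x. h (h x) = x) \<Longrightarrow> i \<in> h ` A \<longleftrightarrow> h i \<in> A"
  by (metis imageE imageI)

lemma conj_permutes:
  assumes hh: "\<And>x. h (h x) = x" and p: "p permutes A"
  shows "h \<circ> p \<circ> h permutes h ` A"
proof (rule bij_imp_permutes)
  have ih: "inj h" by (metis hh injI)
  have b1: "bij_betw h (h ` A) A" using invol_image[OF hh, of A] ih
    by (metis bij_betw_imageI inj_on_subset subset_UNIV)
  have b2: "bij_betw p A A" using p by (rule permutes_imp_bij)
  have b3: "bij_betw h A (h ` A)" using ih by (metis bij_betw_imageI inj_on_subset subset_UNIV)
  have "bij_betw (h \<circ> (p \<circ> h)) (h ` A) (h ` A)"
    by (rule bij_betw_trans[OF bij_betw_trans[OF b1 b2] b3])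
  then show "bij_betw (h \<circ> p \<circ> h) (h ` A) (h ` A)" by (simp add: o_assoc)
next
  fix x assume "x \<notin> h ` A"
  then have "h x \<notin> A" using invol_mem[OF hh] by blast
  then show "(h \<circ> p \<circ> h) x = x" using p hh by (simp add: permutes_not_in)
qed

lemma inv_conj:
  assumes hh: "\<And>x. h (h x) = x" and p: "bij p"
  shows "inv_into UNIV (h \<circ> p \<circ> h) = h \<circ> inv_into UNIV p \<circ> h"
proof (rule inv_unique_comp)
  show "(h \<circ> p \<circ> h) \<circ> (h \<circ> inv_into UNIV p \<circ> h) = id"
    using hh p by (simp add: fun_eq_iff bij_is_surj surj_f_inv_f)
  show "(h \<circ> inv_into UNIV p \<circ> h) \<circ> (h \<circ> p \<circ> h) = id"
    using hh p by (simp add: fun_eq_iff bij_is_inj inv_f_f)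
qed

lemma tr_carrier:
  assumes hh: "\<And>x. h (h x) = x" and x: "x \<in> carrier (W G A)"
  shows "tr h A x \<in> carrier (W G (h ` A))"
proof -
  have f: "fst x \<in> A \<rightarrow>\<^sub>E carrier G" and p: "snd x permutes A" using x by (simp_all add: W_carrier)
  have "(\<lambda>i\<in>h ` A. fst x (h i)) \<in> h ` A \<rightarrow>\<^sub>E carrier G"
    unfolding restrict_PiE_iff
  proof
    fix i assume "i \<in> h ` A"
    then have "h i \<in> A" using invol_mem[OF hh] by blast
    then show "fst x (h i) \<in> carrier G" by (rule PiE_mem[OF f])
  qed
  moreover have "h \<circ> snd x \<circ> h permutes h ` A" by (rule conj_permutes[OF hh p])
  ultimately show ?thesis by (simp add: W_carrier tr_def)
qed

lemma tr_mult:
  assumes hh: "\<And>x. h (h x) = x" and x: "x \<in> carrier (W G A)" and y: "y \<in> carrier (W G A)"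
  shows "tr h A (x \<otimes>\<^bsub>W G A\<^esub> y) = tr h A x \<otimes>\<^bsub>W G (h ` A)\<^esub> tr h A y"
proof -
  have p: "snd x permutes A" using x by (simp add: W_carrier)
  have bp: "bij (snd x)" using p by (rule permutes_bij)
  have ic: "inv_into UNIV (h \<circ> snd x \<circ> h) = h \<circ> inv_into UNIV (snd x) \<circ> h" by (rule inv_conj[OF hh bp])
  have snd_eq: "h \<circ> (snd x \<circ> snd y) \<circ> h = (h \<circ> snd x \<circ> h) \<circ> (h \<circ> snd y \<circ> h)"
    using hh by (simp add: fun_eq_iff)
  have fst_eq: "(\<lambda>i\<in>h ` A. fst (x \<otimes>\<^bsub>W G A\<^esub> y) (h i))
      = (\<lambda>i\<in>h ` A. fst (tr h A x) i \<otimes>\<^bsub>G\<^esub> fst (tr h A y) (inv_into UNIV (snd (tr h A x)) i))"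
  proof (rule restrict_ext)
    fix i assume i: "i \<in> h ` A"
    then have hi: "h i \<in> A" using invol_mem[OF hh] by blast
    have ipA: "inv_into UNIV (snd x) (h i) \<in> A" using hi p by (simp add: permutes_inv permutes_in_image)
    have m: "h (inv_into UNIV (snd x) (h i)) \<in> h ` A" using ipA by blast
    show "fst (x \<otimes>\<^bsub>W G A\<^esub> y) (h i)
        = fst (tr h A x) i \<otimes>\<^bsub>G\<^esub> fst (tr h A y) (inv_into UNIV (snd (tr h A x)) i)"
      using hi i m hh by (simp add: W_mult tr_def ic)
  qed
  have s1: "snd (x \<otimes>\<^bsub>W G A\<^esub> y) = snd x \<circ> snd y" by (simp add: W_mult)
  have s2: "snd (tr h A x) = h \<circ> snd x \<circ> h" "snd (tr h A y) = h \<circ> snd y \<circ> h" by (simp_all add: tr_def)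
  have "tr h A (x \<otimes>\<^bsub>W G A\<^esub> y) = ((\<lambda>i\<in>h ` A. fst (x \<otimes>\<^bsub>W G A\<^esub> y) (h i)), h \<circ> (snd x \<circ> snd y) \<circ> h)"
    unfolding tr_def s1 ..
  also have "\<dots> = ((\<lambda>i\<in>h ` A. fst (tr h A x) i \<otimes>\<^bsub>G\<^esub> fst (tr h A y) (inv_into UNIV (snd (tr h A x)) i)),
      (h \<circ> snd x \<circ> h) \<circ> (h \<circ> snd y \<circ> h))"
    by (simp only: fst_eq snd_eq)
  also have "\<dots> = tr h A x \<otimes>\<^bsub>W G (h ` A)\<^esub> tr h A y"
    by (simp only: W_mult s2)
  finally show ?thesis .
qed

lemma tr_one:
  assumes hh: "\<And>x. h (h x) = x"
  shows "tr h A (\<one>\<^bsub>W G A\<^esub>) = \<one>\<^bsub>W G (h ` A)\<^esub>"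
proof -
  have "(\<lambda>i\<in>h ` A. fst (\<one>\<^bsub>W G A\<^esub>) (h i)) = (\<lambda>i\<in>h ` A. \<one>\<^bsub>G\<^esub>)"
  proof (rule restrict_ext)
    fix i assume "i \<in> h ` A"
    then have "h i \<in> A" using invol_mem[OF hh] by blast
    then show "fst (\<one>\<^bsub>W G A\<^esub>) (h i) = \<one>\<^bsub>G\<^esub>" by (simp add: W_one)
  qed
  moreover have "h \<circ> snd (\<one>\<^bsub>W G A\<^esub>) \<circ> h = id" using hh by (simp add: W_one fun_eq_iff)
  ultimately show ?thesis by (simp add: tr_def W_one)
qed

lemma (in group) tr_pow:
  assumes hh: "\<And>x. h (h x) = x" and x: "x \<in> carrier (W G A)"
  shows "tr h A (x [^]\<^bsub>W G A\<^esub> (k::nat)) = tr h A x [^]\<^bsub>W G (h ` A)\<^esub> k"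
proof (induction k)
  case 0 then show ?case by (simp add: tr_one[OF hh])
next
  case (Suc k)
  have c: "x [^]\<^bsub>W G A\<^esub> k \<in> carrier (W G A)" using x by (simp add: monoid.nat_pow_closed W_monoid)
  show ?case using tr_mult[OF hh c x] Suc by simp
qed

lemma tr_tr:
  assumes hh: "\<And>x. h (h x) = x" and x: "x \<in> carrier (W G A)"
  shows "tr h (h ` A) (tr h A x) = x"
proof -
  have f: "fst x \<in> A \<rightarrow>\<^sub>E carrier G" using x by (simp add: W_carrier)
  have e: "h ` (h ` A) = A" by (rule invol_image[OF hh])
  have "(\<lambda>i\<in>A. fst (tr h A x) (h i)) = fst x"
  proof (rule ext)
    fix i show "(\<lambda>i\<in>A. fst (tr h A x) (h i)) i = fst x i"
    proof (cases "i \<in> A")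
      case True
      then have "h i \<in> h ` A" by blast
      then show ?thesis using True hh by (simp add: tr_def)
    next
      case False then show ?thesis using PiE_arb[OF f False] by simp
    qed
  qed
  moreover have "h \<circ> snd (tr h A x) \<circ> h = snd x" using hh by (simp add: tr_def fun_eq_iff)
  ultimately show ?thesis unfolding tr_def[of h "h ` A"] e by (simp add: prod_eq_iff)
qed

context wr
begin

lemma Om_tr_le:
  assumes hh: "\<And>x. h (h x) = x" and A: "finite A"
  shows "card (Om A) \<le> card (Om (h ` A))"
proof -
  have inj: "inj_on (tr h A) (Om A)"
  proof (rule inj_onI)
    fix x y assume xy: "x \<in> Om A" "y \<in> Om A" "tr h A x = tr h A y"
    have xc: "x \<in> carrier (W G A)" using xy(1) Om_sub by blast
    have yc: "y \<in> carrier (W G A)" using xy(2) Om_sub by blast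
    have "x = tr h (h ` A) (tr h A x)" by (rule tr_tr[OF hh xc, symmetric])
    also have "\<dots> = tr h (h ` A) (tr h A y)" using xy(3) by simp
    also have "\<dots> = y" by (rule tr_tr[OF hh yc])
    finally show "x = y" .
  qed
  have sub: "tr h A ` Om A \<subseteq> Om (h ` A)"
  proof
    fix z assume "z \<in> tr h A ` Om A"
    then obtain x where x: "x \<in> Om A" "z = tr h A x" by blast
    then obtain y where y: "y \<in> carrier (W G A)" "x = y [^]\<^bsub>W G A\<^esub> r" unfolding power_image_def by blast
    have "z = tr h A y [^]\<^bsub>W G (h ` A)\<^esub> r" using x(2) y tr_pow[OF hh y(1)] by simp
    moreover have "tr h A y \<in> carrier (W G (h ` A))" by (rule tr_carrier[OF hh y(1)])
    ultimately show "z \<in> Om (h ` A)" unfolding power_image_def by blast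
  qed
  have fin: "finite (Om (h ` A))"
  proof -
    have "finite (carrier (W G (h ` A)))" using A by (simp add: finite_carrier_W)
    then show ?thesis using Om_sub[of "h ` A"] by (rule finite_subset[rotated])
  qed
  show ?thesis by (rule card_inj_on_le[OF inj sub fin])
qed

lemma Om_tr:
  assumes hh: "\<And>x. h (h x) = x" and A: "finite A"
  shows "card (Om (h ` A)) = card (Om A)"
  using Om_tr_le[OF hh A] Om_tr_le[OF hh, of "h ` A"] A invol_image[OF hh, of A] by simp

lemma Rp_RP: "Rp C = RP r C" by (simp add: Rp_def RP_def)

lemma D_dvd:
  assumes T: "finite T" and ne: "D T \<noteq> {}" shows "r dvd card T"
proof -
  obtain z where z: "z \<in> D T" using ne by blast
  then have zO: "z \<in> Om T" and all: "\<forall>i\<in>T. r dvd least_power (snd z) i" by (simp_all add: D_def)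
  have "z \<in> carrier (W G T)" using zO Om_sub by blast
  then have "snd z permutes T" by (simp add: W_carrier)
  then show ?thesis using dvd_card_all_periods T all by blast
qed

lemma count_Om2:
  assumes B: "finite B"
  shows "card (Om B) = (\<Sum>T\<in>Pow B. card (D T) * (card (carrier G) ^ card (B - T) * rho r (card (B - T))))"
proof -
  have "card (Om B) = (\<Sum>T\<in>Pow B. card (D T) * card (WR (B - T)))" by (rule count_Om[OF B])
  also have "\<dots> = (\<Sum>T\<in>Pow B. card (D T) * (card (carrier G) ^ card (B - T) * rho r (card (B - T))))"
  proof (rule sum.cong[OF refl])
    fix T assume "T \<in> Pow B"
    have fBT: "finite (B - T)" using B by simp
    show "card (D T) * card (WR (B - T)) = card (D T) * (card (carrier G) ^ card (B - T) * rho r (card (B - T)))"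
      using card_WR[OF fBT] card_RP_rho[OF fBT, of r] by (simp add: Rp_RP)
  qed
  finally show ?thesis .
qed

lemma transpose_image:
  assumes j: "j \<le> n"
  shows "Transposition.transpose j n ` ({0..<Suc n} - {j}) = {0..<n}"
proof -
  have p: "Transposition.transpose j n permutes {0..<Suc n}" using j by (intro permutes_swap_id) auto
  have "inj (Transposition.transpose j n)" by simp
  then have "Transposition.transpose j n ` ({0..<Suc n} - {j})
      = Transposition.transpose j n ` {0..<Suc n} - Transposition.transpose j n ` {j}"
    by (rule image_set_diff)
  also have "\<dots> = {0..<Suc n} - {n}" using permutes_image[OF p] by simp
  also have "\<dots> = {0..<n}" by auto
  finally show ?thesis .
qed

lemma main_count:
  assumes nd: "\<not> r dvd Suc n"
  shows "card (Om {0..<Suc n}) = card (carrier G) * Suc n * card (Om {0..<n})"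
proof -
  define N where "N = {0..<Suc n}"
  define g where "g = card (carrier G)"
  define E where "E T = card (D T) * (g ^ (n - card T) * rho r (n - card T))" for T
  have finN: "finite N" by (simp add: N_def)
  have "card (Om N) = (\<Sum>T\<in>Pow N. card (D T) * (g ^ card (N - T) * rho r (card (N - T))))"
    unfolding g_def by (rule count_Om2[OF finN])
  also have "\<dots> = (\<Sum>T\<in>Pow N. g * (card (N - T) * E T))"
  proof (rule sum.cong[OF refl])
    fix T assume T: "T \<in> Pow N"
    then have TN: "T \<subseteq> N" by simp
    have fT: "finite T" using TN finN finite_subset by blast
    have cNT: "card (N - T) = Suc n - card T" using TN fT by (simp add: card_Diff_subset N_def)
    have cT: "card T \<le> Suc n" using card_mono[OF finN TN] by (simp add: N_def)
    show "card (D T) * (g ^ card (N - T) * rho r (card (N - T))) = g * (card (N - T) * E T)"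
    proof (cases "D T = {}")
      case True then show ?thesis by (simp add: E_def)
    next
      case False
      then have rT: "r dvd card T" by (rule D_dvd[OF fT])
      have "card T \<noteq> Suc n" using rT nd by auto
      then have cT': "card T \<le> n" using cT by simp
      define k where "k = n - card T"
      have ck: "card (N - T) = Suc k" using cNT cT' by (simp add: k_def)
      have "Suc k + card T = Suc n" using cT' by (simp add: k_def)
      then have ndk: "\<not> r dvd Suc k" using rT nd by (metis dvd_add)
      have "rho r (Suc k) = Suc k * rho r k" using rho_mult[OF ndk] by simp
      then show ?thesis unfolding ck E_def k_def[symmetric] by (simp add: algebra_simps)
    qed
  qed
  also have "\<dots> = g * (\<Sum>T\<in>Pow N. \<Sum>j\<in>{j. j \<in> N \<and> j \<notin> T}. E T)"
  proof -
    have "(\<Sum>T\<in>Pow N. g * (card (N - T) * E T)) = g * (\<Sum>T\<in>Pow N. card (N - T) * E T)"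
      by (simp add: sum_distrib_left)
    also have "(\<Sum>T\<in>Pow N. card (N - T) * E T) = (\<Sum>T\<in>Pow N. \<Sum>j\<in>{j. j \<in> N \<and> j \<notin> T}. E T)"
    proof (rule sum.cong[OF refl])
      fix T
      have "{j. j \<in> N \<and> j \<notin> T} = N - T" by blast
      then show "card (N - T) * E T = (\<Sum>j\<in>{j. j \<in> N \<and> j \<notin> T}. E T)" by simp
    qed
    finally show ?thesis .
  qed
  also have "(\<Sum>T\<in>Pow N. \<Sum>j\<in>{j. j \<in> N \<and> j \<notin> T}. E T) = (\<Sum>j\<in>N. \<Sum>T\<in>{T. T \<in> Pow N \<and> j \<notin> T}. E T)"
    by (rule sum.swap_restrict) (simp_all add: finN)
  also have "\<dots> = (\<Sum>j\<in>N. card (Om {0..<n}))"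
  proof (rule sum.cong[OF refl])
    fix j assume jN: "j \<in> N"
    define B where "B = N - {j}"
    have fB: "finite B" using finN by (simp add: B_def)
    have cB: "card B = n" using jN finN by (simp add: B_def N_def)
    have PB: "{T. T \<in> Pow N \<and> j \<notin> T} = Pow B" by (auto simp: B_def)
    have "(\<Sum>T\<in>Pow B. E T) = (\<Sum>T\<in>Pow B. card (D T) * (g ^ card (B - T) * rho r (card (B - T))))"
    proof (rule sum.cong[OF refl])
      fix T assume "T \<in> Pow B"
      then have TB: "T \<subseteq> B" by simp
      have "card (B - T) = n - card T" using TB cB fB by (simp add: card_Diff_subset finite_subset)
      then show "E T = card (D T) * (g ^ card (B - T) * rho r (card (B - T)))" by (simp add: E_def)
    qed
    also have "\<dots> = card (Om B)" unfolding g_def by (rule count_Om2[OF fB, symmetric])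
    also have "\<dots> = card (Om {0..<n})"
    proof -
      have jn: "j \<le> n" using jN by (simp add: N_def)
      have "card (Om (Transposition.transpose j n ` B)) = card (Om B)"
        by (rule Om_tr[OF _ fB]) simp
      then show ?thesis using transpose_image[OF jn] by (simp add: B_def N_def)
    qed
    finally show "(\<Sum>T\<in>{T. T \<in> Pow N \<and> j \<notin> T}. E T) = card (Om {0..<n})" using PB by simp
  qed
  also have "\<dots> = Suc n * card (Om {0..<n})" by (simp add: N_def)
  finally show ?thesis by (simp add: N_def g_def algebra_simps)
qed

end

theorem theorem5p6:
  fixes G :: "('a, 'b) monoid_scheme" and r n :: nat
  assumes "group G" and "finite (carrier G)"
    and "prime r" and "coprime r (card (carrier G))"
    and "\<not> [int n = -1] (mod int r)"
  shows "P_r G r (n + 1) = P_r G r n"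
proof -
  have w: "wr G r" using assms(1-4) by (simp add: wr_def wr_axioms_def)
  interpret wr G r by (rule w)
  have nd: "\<not> r dvd Suc n"
  proof
    assume "r dvd Suc n"
    then have "int r dvd int n - (-1)" by (metis add.commute diff_minus_eq_add int_dvd_int_iff of_nat_Suc)
    then have "[int n = -1] (mod int r)" by (simp add: cong_iff_dvd_diff)
    then show False using assms(5) by simp
  qed
  have mc: "card (Om {0..<Suc n}) = card (carrier G) * Suc n * card (Om {0..<n})" by (rule main_count[OF nd])
  have gpos: "card (carrier G) > 0" using assms(2) by (metis card_gt_0_iff empty_iff one_closed)
  define g where "g = real (card (carrier G))"
  define m where "m = real (Suc n)"
  define c where "c = real (card (Om {0..<n}))"
  have gm: "g * m \<noteq> 0" using gpos by (simp add: g_def m_def)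
  have e1: "real (card (Om {0..<Suc n})) = g * m * c" unfolding mc g_def m_def c_def by (simp only: of_nat_mult)
  have e2: "real (card (carrier G)) ^ (n + 1) * fact (n + 1) = (g * m) * (g ^ n * fact n)"
    by (simp add: g_def m_def fact_Suc ac_simps)
  have "P_r G r (n + 1) = real (card (Om {0..<Suc n})) / (real (card (carrier G)) ^ (n + 1) * fact (n + 1))"
    unfolding P_r_def wreath_W by (simp only: Suc_eq_plus1 of_nat_fact)
  also have "\<dots> = (g * m * c) / ((g * m) * (g ^ n * fact n))" by (simp only: e1 e2)
  also have "\<dots> = c / (g ^ n * fact n)"
    using nonzero_mult_divide_mult_cancel_left[OF gm, of c "g ^ n * fact n"] by (simp add: ac_simps)
  also have "\<dots> = P_r G r n" unfolding P_r_def wreath_W c_def g_def of_nat_fact ..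
  finally show ?thesis .
qed


end
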